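(* Let $I\unlhd \mathcal O_K[x_1,\dots,x_n]$ be an ideal and let $w\in\mathbb R^n$. Then $$\overline{\operatorname{in}_{(-1,w)}(\pi^{-1}I)}\big|_{t=1}=\operatorname{in}_{\nu,w}(I).$$
   Context: Let $K$ be a complete field with a non-trivial discrete valuation $\nu:K\to\mathbb R\cup\{\infty\}$ and a uniformizing parameter $p\in K$, with $\nu$ normalized so that $\nu(p)=1$. Let $\mathcal O_K$ be its ring of integers and $\mathfrak K$ its residue field. Let $R\subseteq\mathcal O_K$ be a dense noetherian subring with $p\in R$. Write $x=(x_1,\dots,x_n)$. The map $\pi:R[[t]][x]\to\mathcal O_K[x]$, $t\mapsto p$, is surjective with kernel $\langle p-t\rangle$. For an ideal $I$, $\pi^{-1}I$ denotes its preimage in $R[[t]][x]$. Initial forms over $K$: for $f=\sum_\alpha c_\alpha x^\alpha\in K[x]$ and $w\in\mathbb R^n$, $\operatorname{in}_{\nu,w}(f)=\sum \overline{c_\alpha p^{-\nu(c_\alpha)}}\,x^\alpha\in\mathfrak K[x]$. The sum runs over those $\alpha$ with $c_\alpha\neq0$ for which $w\cdot\alpha-\nu(c_\alpha)$ is maximal, and the bar denotes reduction to $\mathfrak K$. For a subset $I$, $\operatorname{in}_{\nu,w}(I)$ is the ideal of $\mathfrak K[x]$ generated by all $\operatorname{in}_{\nu,w}(f)$ with $f\in I$. Initial forms over $R[[t]]$: for $f=\sum_{\beta,\alpha}c_{\alpha,\beta}t^\beta x^\alpha\in R[[t]][x]$ and $w\in\mathbb R_{<0}\times\mathbb R^n$,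 $\operatorname{in}_w(f)\in R[t,x]$ is the sum of the terms $c_{\alpha,\beta}t^\beta x^\alpha$ for which $w\cdot(\beta,\alpha)$ is maximal. For an ideal $J$, $\operatorname{in}_w(J)\unlhd R[t,x]$ is generated by all $\operatorname{in}_w(f)$ with $f\in J$. For $J\unlhd R[t,x]$, $\overline{J}|_{t=1}$ denotes the image of $J$ under the map $R[t,x]\to\mathfrak K[x]$. This map reduces coefficients modulo the maximal ideal of $\mathcal O_K$ and substitutes $t=1$. *)

theory Defs
  imports "HOL-Library.Poly_Mapping" "HOL-Computational_Algebra.Formal_Power_Series"
begin

(* K is a field of type 'k; the discrete valuation nu is normalized (nu p = 1), so its
   values on K^* are integers: v :: 'k => int, with nu(0) = infinity encoded by the
   convention that v is only consulted on nonzero elements. *)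
definition discrete_valuation :: "('k::field \<Rightarrow> int) \<Rightarrow> 'k \<Rightarrow> bool" where
  "discrete_valuation v p \<longleftrightarrow>
     p \<noteq> 0 \<and> v p = 1 \<and>
     (\<forall>x y. x \<noteq> 0 \<longrightarrow> y \<noteq> 0 \<longrightarrow> v (x * y) = v x + v y) \<and>
     (\<forall>x y. x \<noteq> 0 \<longrightarrow> y \<noteq> 0 \<longrightarrow> x + y \<noteq> 0 \<longrightarrow> v (x + y) \<ge> min (v x) (v y))"

definition vclose :: "('k::field \<Rightarrow> int) \<Rightarrow> int \<Rightarrow> 'k \<Rightarrow> 'k \<Rightarrow> bool" where
  "vclose v N x y \<longleftrightarrow> x = y \<or> v (x - y) \<ge> N"

definition vconverges :: "('k::field \<Rightarrow> int) \<Rightarrow> (nat \<Rightarrow> 'k) \<Rightarrow> 'k \<Rightarrow> bool" where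
  "vconverges v s L \<longleftrightarrow> (\<forall>N. \<exists>M. \<forall>m\<ge>M. vclose v N (s m) L)"

definition vcauchy :: "('k::field \<Rightarrow> int) \<Rightarrow> (nat \<Rightarrow> 'k) \<Rightarrow> bool" where
  "vcauchy v s \<longleftrightarrow> (\<forall>N. \<exists>M. \<forall>m\<ge>M. \<forall>k\<ge>M. vclose v N (s m) (s k))"

definition vcomplete :: "('k::field \<Rightarrow> int) \<Rightarrow> bool" where
  "vcomplete v \<longleftrightarrow> (\<forall>s. vcauchy v s \<longrightarrow> (\<exists>L. vconverges v s L))"

definition OK :: "('k::field \<Rightarrow> int) \<Rightarrow> 'k set" where
  "OK v = {x. x = 0 \<or> v x \<ge> 0}"

definition residue_map :: "('k::field \<Rightarrow> int) \<Rightarrow> ('k \<Rightarrow> 'r::field) \<Rightarrow> bool" where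
  "residue_map v res \<longleftrightarrow>
     (\<forall>x\<in>OK v. \<forall>y\<in>OK v. res (x + y) = res x + res y \<and> res (x * y) = res x * res y) \<and>
     res 1 = 1 \<and> res ` OK v = UNIV \<and>
     (\<forall>x\<in>OK v. res x = 0 \<longleftrightarrow> (x = 0 \<or> v x > 0))"

definition is_ideal :: "'a::comm_ring_1 set \<Rightarrow> 'a set \<Rightarrow> bool" where
  "is_ideal A J \<longleftrightarrow> J \<subseteq> A \<and> 0 \<in> J \<and> (\<forall>x\<in>J. \<forall>y\<in>J. x + y \<in> J) \<and>
      (\<forall>a\<in>A. \<forall>x\<in>J. a * x \<in> J)"

definition ideal_gen :: "'a::comm_ring_1 set \<Rightarrow> 'a set \<Rightarrow> 'a set" where
  "ideal_gen A S = \<Inter>{J. is_ideal A J \<and> S \<subseteq> J}"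

definition is_subring :: "'a::comm_ring_1 set \<Rightarrow> bool" where
  "is_subring A \<longleftrightarrow> 0 \<in> A \<and> 1 \<in> A \<and> (\<forall>x\<in>A. \<forall>y\<in>A. x + y \<in> A \<and> x - y \<in> A \<and> x * y \<in> A)"

definition noetherian_subring :: "'a::comm_ring_1 set \<Rightarrow> bool" where
  "noetherian_subring A \<longleftrightarrow> is_subring A \<and>
     (\<forall>J. is_ideal A J \<longrightarrow> (\<exists>G. finite G \<and> G \<subseteq> J \<and> J = ideal_gen A G))"

definition dense_noeth_subring :: "('k::field \<Rightarrow> int) \<Rightarrow> 'k \<Rightarrow> 'k set \<Rightarrow> bool" where
  "dense_noeth_subring v p R \<longleftrightarrow> noetherian_subring R \<and> R \<subseteq> OK v \<and> p \<in> R \<and>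
     (\<forall>x\<in>OK v. \<forall>N. \<exists>r\<in>R. vclose v N x r)"

(* K[x]         : ('n =>0 nat) =>0 'k
   R[[t]][x]    : ('n =>0 nat) =>0 'k fps  (with all coefficients in R)
   R[t,x]       : ('n option =>0 nat) =>0 'k (None is the variable t; coefficients in R)
   residue[x]   : ('n =>0 nat) =>0 'r *)

definition coeff_poly :: "'k set \<Rightarrow> (('n \<Rightarrow>\<^sub>0 nat) \<Rightarrow>\<^sub>0 'k::comm_ring_1) set" where
  "coeff_poly A = {f. \<forall>a. Poly_Mapping.lookup f a \<in> A}"

definition coeff_pstx :: "'k set \<Rightarrow> (('n \<Rightarrow>\<^sub>0 nat) \<Rightarrow>\<^sub>0 'k::comm_ring_1 fps) set" where
  "coeff_pstx A = {F. \<forall>a b. fps_nth (Poly_Mapping.lookup F a) b \<in> A}"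

definition coeff_ptx :: "'k set \<Rightarrow> (('n option \<Rightarrow>\<^sub>0 nat) \<Rightarrow>\<^sub>0 'k::comm_ring_1) set" where
  "coeff_ptx A = {G. \<forall>m. Poly_Mapping.lookup G m \<in> A}"

definition wdot :: "('n::finite \<Rightarrow> real) \<Rightarrow> ('n \<Rightarrow>\<^sub>0 nat) \<Rightarrow> real" where
  "wdot w a = (\<Sum>i\<in>UNIV. w i * real (Poly_Mapping.lookup a i))"

definition tx_mono :: "('n::finite \<Rightarrow>\<^sub>0 nat) \<Rightarrow> nat \<Rightarrow> ('n option \<Rightarrow>\<^sub>0 nat)" where
  "tx_mono a b = Abs_poly_mapping (\<lambda>j. case j of None \<Rightarrow> b | Some i \<Rightarrow> Poly_Mapping.lookup a i)"

definition x_part :: "('n::finite option \<Rightarrow>\<^sub>0 nat) \<Rightarrow> ('n \<Rightarrow>\<^sub>0 nat)" where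
  "x_part m = Abs_poly_mapping (\<lambda>i. Poly_Mapping.lookup m (Some i))"

definition fps_at :: "('k::field \<Rightarrow> int) \<Rightarrow> 'k \<Rightarrow> 'k fps \<Rightarrow> 'k" where
  "fps_at v p f = (THE L. vconverges v (\<lambda>N. \<Sum>b<N. fps_nth f b * p ^ b) L)"

definition pi_map :: "('k::field \<Rightarrow> int) \<Rightarrow> 'k \<Rightarrow> (('n \<Rightarrow>\<^sub>0 nat) \<Rightarrow>\<^sub>0 'k fps) \<Rightarrow> (('n \<Rightarrow>\<^sub>0 nat) \<Rightarrow>\<^sub>0 'k)" where
  "pi_map v p F = (\<Sum>a\<in>Poly_Mapping.keys F. Poly_Mapping.single a (fps_at v p (Poly_Mapping.lookup F a)))"

definition pi_preimage :: "('k::field \<Rightarrow> int) \<Rightarrow> 'k \<Rightarrow> 'k set \<Rightarrow> (('n \<Rightarrow>\<^sub>0 nat) \<Rightarrow>\<^sub>0 'k) set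
     \<Rightarrow> (('n \<Rightarrow>\<^sub>0 nat) \<Rightarrow>\<^sub>0 'k fps) set" where
  "pi_preimage v p R I = {F \<in> coeff_pstx R. pi_map v p F \<in> I}"

(* initial form over R[[t]] w.r.t. the weight (-1, w): the term c t^b x^a has weight -b + w.a *)
definition tx_terms :: "(('n::finite \<Rightarrow>\<^sub>0 nat) \<Rightarrow>\<^sub>0 'k::comm_ring_1 fps) \<Rightarrow> (('n \<Rightarrow>\<^sub>0 nat) \<times> nat) set" where
  "tx_terms F = {(a, b). fps_nth (Poly_Mapping.lookup F a) b \<noteq> 0}"

definition in_tw :: "('n::finite \<Rightarrow> real) \<Rightarrow> (('n \<Rightarrow>\<^sub>0 nat) \<Rightarrow>\<^sub>0 'k::comm_ring_1 fps)
     \<Rightarrow> (('n option \<Rightarrow>\<^sub>0 nat) \<Rightarrow>\<^sub>0 'k)" where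
  "in_tw w F =
     (let wt = (\<lambda>(a, b). wdot w a - real b);
          M = Sup (wt ` tx_terms F)
      in \<Sum>(a, b)\<in>{ab \<in> tx_terms F. wt ab = M}.
            Poly_Mapping.single (tx_mono a b) (fps_nth (Poly_Mapping.lookup F a) b))"

definition in_tw_ideal :: "'k set \<Rightarrow> ('n::finite \<Rightarrow> real) \<Rightarrow> (('n \<Rightarrow>\<^sub>0 nat) \<Rightarrow>\<^sub>0 'k::comm_ring_1 fps) set
     \<Rightarrow> (('n option \<Rightarrow>\<^sub>0 nat) \<Rightarrow>\<^sub>0 'k) set" where
  "in_tw_ideal R w J = ideal_gen (coeff_ptx R) (in_tw w ` J)"

definition reduce_t1 :: "('k \<Rightarrow> 'r::field) \<Rightarrow> (('n::finite option \<Rightarrow>\<^sub>0 nat) \<Rightarrow>\<^sub>0 'k::comm_ring_1)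
     \<Rightarrow> (('n \<Rightarrow>\<^sub>0 nat) \<Rightarrow>\<^sub>0 'r)" where
  "reduce_t1 res G = (\<Sum>m\<in>Poly_Mapping.keys G. Poly_Mapping.single (x_part m) (res (Poly_Mapping.lookup G m)))"

definition in_vw :: "('k::field \<Rightarrow> int) \<Rightarrow> 'k \<Rightarrow> ('k \<Rightarrow> 'r::field) \<Rightarrow> ('n::finite \<Rightarrow> real)
     \<Rightarrow> (('n \<Rightarrow>\<^sub>0 nat) \<Rightarrow>\<^sub>0 'k) \<Rightarrow> (('n \<Rightarrow>\<^sub>0 nat) \<Rightarrow>\<^sub>0 'r)" where
  "in_vw v p res w f =
     (let wt = (\<lambda>a. wdot w a - real_of_int (v (Poly_Mapping.lookup f a)));
          M = Max (wt ` Poly_Mapping.keys f)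
      in \<Sum>a\<in>{a \<in> Poly_Mapping.keys f. wt a = M}.
           Poly_Mapping.single a (res (Poly_Mapping.lookup f a * p powi (- v (Poly_Mapping.lookup f a)))))"

definition in_vw_ideal :: "('k::field \<Rightarrow> int) \<Rightarrow> 'k \<Rightarrow> ('k \<Rightarrow> 'r::field) \<Rightarrow> ('n::finite \<Rightarrow> real)
     \<Rightarrow> (('n \<Rightarrow>\<^sub>0 nat) \<Rightarrow>\<^sub>0 'k) set \<Rightarrow> (('n \<Rightarrow>\<^sub>0 nat) \<Rightarrow>\<^sub>0 'r) set" where
  "in_vw_ideal v p res w I = ideal_gen UNIV (in_vw v p res w ` I)"

end

theory Submission
  imports Defs
begin


locale vsetting =
  fixes v :: "'k::field \<Rightarrow> int" and p :: 'k and res :: "'k \<Rightarrow> 'r::field" and R :: "'k set"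
  assumes dv: "discrete_valuation v p"
    and cpl: "vcomplete v"
    and rm: "residue_map v res"
    and dn: "dense_noeth_subring v p R"
begin

definition vge :: "int \<Rightarrow> 'k \<Rightarrow> bool" where "vge n x \<longleftrightarrow> x = 0 \<or> n \<le> v x"

lemma p_nz: "p \<noteq> 0" and vp: "v p = 1"
  and vmult: "x \<noteq> 0 \<Longrightarrow> y \<noteq> 0 \<Longrightarrow> v (x * y) = v x + v y"
  and vadd: "x \<noteq> 0 \<Longrightarrow> y \<noteq> 0 \<Longrightarrow> x + y \<noteq> 0 \<Longrightarrow> v (x + y) \<ge> min (v x) (v y)"
  using dv unfolding discrete_valuation_def by auto

lemma v1: "v 1 = 0" using vmult[of 1 1] by simp

lemma vneg: "v (- x) = v x"
proof (cases "x = 0")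
  case False
  have "v ((-1) * (-1)) = v (-1) + v (-1)" by (rule vmult) auto
  then have m1: "v (-1) = 0" using v1 by simp
  have "v ((-1) * x) = v (-1) + v x" using False by (intro vmult) auto
  then show ?thesis using m1 by simp
qed simp

lemma vpow: "p ^ k \<noteq> 0 \<and> v (p ^ k) = int k"
proof (induction k)
  case 0 then show ?case using v1 by simp
next
  case (Suc k) then show ?case using vmult[of p "p^k"] p_nz vp by simp
qed

lemma vinv: "x \<noteq> 0 \<Longrightarrow> v (inverse x) = - v x"
  using vmult[of x "inverse x"] v1 by simp

lemma vpowi: "v (p powi k) = k"
proof (cases "k \<ge> 0")
  case True then show ?thesis using vpow[of "nat k"] by (simp add: power_int_def)
next
  case False then show ?thesis using vpow[of "nat (-k)"] vinv[of "p ^ nat (-k)"]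
    by (simp add: power_int_def power_inverse[symmetric])
qed

lemma powi_nz: "p powi k \<noteq> 0" using p_nz by simp

lemma vge_0 [simp]: "vge n 0" by (simp add: vge_def)

lemma vge_add: "vge n x \<Longrightarrow> vge n y \<Longrightarrow> vge n (x + y)"
  unfolding vge_def using vadd[of x y] by force

lemma vge_neg: "vge n x \<Longrightarrow> vge n (- x)"
  unfolding vge_def using vneg by auto

lemma vge_diff: "vge n x \<Longrightarrow> vge n y \<Longrightarrow> vge n (x - y)"
  using vge_add[of n x "-y"] vge_neg by simp

lemma vge_mult: "vge n x \<Longrightarrow> vge m y \<Longrightarrow> vge (n + m) (x * y)"
  unfolding vge_def using vmult[of x y] by (cases "x = 0"; cases "y = 0") auto

lemma vge_mono: "vge n x \<Longrightarrow> m \<le> n \<Longrightarrow> vge m x"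
  unfolding vge_def by auto

lemma vge_self: "vge (v x) x" unfolding vge_def by auto

lemma vge_sum: "(\<And>i. i \<in> A \<Longrightarrow> vge n (f i)) \<Longrightarrow> vge n (sum f A)"
  by (induction A rule: infinite_finite_induct) (auto intro: vge_add)

lemma strict:
  assumes "x \<noteq> 0" "vge (v x + 1) e"
  shows "x + e \<noteq> 0 \<and> v (x + e) = v x"
proof (cases "e = 0")
  case True then show ?thesis using assms by simp
next
  case False
  then have ve: "v e > v x" using assms unfolding vge_def by auto
  have ne: "x + e \<noteq> 0"
  proof
    assume "x + e = 0" then have "e = - x" by (simp add: add_eq_0_iff)
    then show False using ve vneg by simp
  qed
  have "v (x + e) \<ge> v x" using vadd[OF assms(1) False ne] ve by simp
  moreover have "v ((x + e) + (- e)) \<ge> min (v (x + e)) (v (- e))"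
    using vadd[OF ne, of "- e"] False assms(1) by simp
  then have "v x \<ge> min (v (x + e)) (v e)" using vneg by simp
  ultimately show ?thesis using ne ve by linarith
qed

lemma vclose_iff: "vclose v N x y \<longleftrightarrow> vge N (x - y)"
  unfolding vclose_def vge_def by auto

lemma OK_iff: "x \<in> OK v \<longleftrightarrow> vge 0 x" unfolding OK_def vge_def by auto

lemma res_add: "x \<in> OK v \<Longrightarrow> y \<in> OK v \<Longrightarrow> res (x + y) = res x + res y"
  and res_mult: "x \<in> OK v \<Longrightarrow> y \<in> OK v \<Longrightarrow> res (x * y) = res x * res y"
  and res_1: "res 1 = 1" and res_surj: "res ` OK v = UNIV"
  and res_0_iff: "x \<in> OK v \<Longrightarrow> res x = 0 \<longleftrightarrow> vge 1 x"
  using rm unfolding residue_map_def vge_def by auto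

lemma OK_add: "x \<in> OK v \<Longrightarrow> y \<in> OK v \<Longrightarrow> x + y \<in> OK v"
  by (simp add: OK_iff vge_add)
lemma OK_diff: "x \<in> OK v \<Longrightarrow> y \<in> OK v \<Longrightarrow> x - y \<in> OK v"
  by (simp add: OK_iff vge_diff)
lemma OK_mult: "x \<in> OK v \<Longrightarrow> y \<in> OK v \<Longrightarrow> x * y \<in> OK v"
  using vge_mult[of 0 x 0 y] by (simp add: OK_iff)
lemma OK_0: "0 \<in> OK v" by (simp add: OK_iff)
lemma OK_1: "1 \<in> OK v" using v1 by (simp add: OK_iff vge_def)
lemma OK_p: "p \<in> OK v" using vp by (simp add: OK_iff vge_def)
lemma OK_pow: "p ^ k \<in> OK v" using vpow[of k] by (simp add: OK_iff vge_def)

lemma res_0: "res 0 = 0" using res_0_iff[OF OK_0] by simp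
lemma res_diff: "x \<in> OK v \<Longrightarrow> y \<in> OK v \<Longrightarrow> res (x - y) = res x - res y"
  using res_add[of y "x - y"] OK_diff by simp

lemma R_sub: "is_subring R" and R_OK: "R \<subseteq> OK v" and p_R: "p \<in> R"
  and dense: "x \<in> OK v \<Longrightarrow> \<exists>r\<in>R. vclose v N x r"
  using dn unfolding dense_noeth_subring_def noetherian_subring_def by auto

lemma R_0: "0 \<in> R" and R_1: "1 \<in> R"
  and R_add: "x \<in> R \<Longrightarrow> y \<in> R \<Longrightarrow> x + y \<in> R"
  and R_mult: "x \<in> R \<Longrightarrow> y \<in> R \<Longrightarrow> x * y \<in> R"
  and R_diff: "x \<in> R \<Longrightarrow> y \<in> R \<Longrightarrow> x - y \<in> R"
  using R_sub unfolding is_subring_def by auto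

end

context vsetting begin

definition S :: "'k fps \<Rightarrow> nat \<Rightarrow> 'k" where "S f N = (\<Sum>b<N. fps_nth f b * p ^ b)"

definition OKfps :: "'k fps \<Rightarrow> bool" where "OKfps f \<longleftrightarrow> (\<forall>b. fps_nth f b \<in> OK v)"

lemma lim_unique:
  assumes "vconverges v s L" "vconverges v s L'" shows "L = L'"
proof (rule ccontr)
  assume ne: "L \<noteq> L'"
  define N where "N = v (L - L') + 1"
  obtain M1 where M1: "\<forall>m\<ge>M1. vclose v N (s m) L" using assms(1) unfolding vconverges_def by blast
  obtain M2 where M2: "\<forall>m\<ge>M2. vclose v N (s m) L'" using assms(2) unfolding vconverges_def by blast
  have "vge N (s (max M1 M2) - L)" "vge N (s (max M1 M2) - L')"
    using M1 M2 by (auto simp: vclose_iff)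
  then have "vge N ((s (max M1 M2) - L') - (s (max M1 M2) - L))" by (rule vge_diff[rotated])
  then have "vge N (L - L')" by (simp add: algebra_simps)
  then show False using ne unfolding vge_def N_def by auto
qed

lemma S_tail:
  assumes "OKfps f" "N \<le> m"
  shows "vge (int N) (S f m - S f N)"
proof -
  have "S f m = S f N + (\<Sum>b\<in>{N..<m}. fps_nth f b * p ^ b)"
    unfolding S_def using assms(2)
    by (metis atLeast0LessThan sum.atLeastLessThan_concat zero_le)
  moreover have "vge (int N) (\<Sum>b\<in>{N..<m}. fps_nth f b * p ^ b)"
  proof (rule vge_sum)
    fix b assume b: "b \<in> {N..<m}"
    have "vge (0 + int b) (fps_nth f b * p ^ b)"
      using assms(1) vpow[of b] by (intro vge_mult) (auto simp: OKfps_def OK_iff vge_def)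
    then show "vge (int N) (fps_nth f b * p ^ b)" using b by (auto intro: vge_mono)
  qed
  ultimately show ?thesis by simp
qed

lemma fps_at_conv:
  assumes "OKfps f"
  shows "vconverges v (S f) (fps_at v p f)"
proof -
  have "vcauchy v (S f)"
    unfolding vcauchy_def
  proof
    fix N :: int
    show "\<exists>M. \<forall>m\<ge>M. \<forall>k\<ge>M. vclose v N (S f m) (S f k)"
    proof (intro exI allI impI)
      fix m k assume "nat N \<le> m" "nat N \<le> k"
      then have "vge (int (nat N)) (S f m - S f (nat N))" "vge (int (nat N)) (S f k - S f (nat N))"
        using S_tail[OF assms] by presburger+
      then have "vge (int (nat N)) ((S f m - S f (nat N)) - (S f k - S f (nat N)))" by (rule vge_diff)
      then show "vclose v N (S f m) (S f k)" by (auto simp: vclose_iff intro: vge_mono)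
    qed
  qed
  then obtain L where L: "vconverges v (S f) L" using cpl unfolding vcomplete_def by blast
  have "fps_at v p f = L" unfolding fps_at_def S_def[symmetric]
    using L lim_unique by (intro the1_equality) auto
  then show ?thesis using L by simp
qed

lemma fps_at_tail:
  assumes "OKfps f"
  shows "vge (int N) (fps_at v p f - S f N)"
proof -
  obtain M where M: "\<forall>m\<ge>M. vclose v (int N) (S f m) (fps_at v p f)"
    using fps_at_conv[OF assms] unfolding vconverges_def by blast
  have a: "vge (int N) (S f (max M N) - fps_at v p f)" using M by (simp add: vclose_iff)
  have b: "vge (int N) (S f (max M N) - S f N)" using S_tail[OF assms] by simp
  have "vge (int N) ((S f (max M N) - S f N) - (S f (max M N) - fps_at v p f))"
    using vge_diff[OF b a] .
  then show ?thesis by (simp add: algebra_simps)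
qed

lemma fps_at_eqI:
  assumes "OKfps f" "\<And>N. vge (int N) (c - S f N)"
  shows "fps_at v p f = c"
proof -
  have "vconverges v (S f) c"
    unfolding vconverges_def
  proof
    fix N :: int
    show "\<exists>M. \<forall>m\<ge>M. vclose v N (S f m) c"
    proof (intro exI[of _ "nat N"] allI impI)
      fix m assume "nat N \<le> m"
      have "vge (int m) (- (c - S f m))" using assms(2) vge_neg by blast
      then have "vge (int m) (S f m - c)" by simp
      then show "vclose v N (S f m) c" using \<open>nat N \<le> m\<close> by (auto simp: vclose_iff intro: vge_mono)
    qed
  qed
  then show ?thesis using fps_at_conv[OF assms(1)] lim_unique by blast
qed

lemma fps_at_0: "fps_at v p 0 = 0"
  by (rule fps_at_eqI) (auto simp: OKfps_def S_def OK_0)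

lemma fps_at_OK: assumes "OKfps f" shows "fps_at v p f \<in> OK v"
proof -
  have "vge 0 (S f 0)" by (simp add: S_def)
  then show ?thesis using fps_at_tail[OF assms, of 0] vge_add[of 0 "fps_at v p f - S f 0" "S f 0"]
    by (simp add: OK_iff)
qed

end

context vsetting begin

definition lb :: "'k fps \<Rightarrow> nat" where "lb f = (LEAST b. fps_nth f b \<noteq> 0)"

lemma lb_nz: "f \<noteq> 0 \<Longrightarrow> fps_nth f (lb f) \<noteq> 0"
  unfolding lb_def by (rule LeastI_ex) (auto simp: fps_eq_iff)

lemma lb_le: "fps_nth f b \<noteq> 0 \<Longrightarrow> lb f \<le> b"
  unfolding lb_def by (rule Least_le)

lemma fps_at_split:
  assumes "OKfps f" "f \<noteq> 0"
  shows "vge (int (lb f) + 1) (fps_at v p f - fps_nth f (lb f) * p ^ lb f)"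
proof -
  have "S f (Suc (lb f)) = fps_nth f (lb f) * p ^ lb f"
  proof -
    have "\<forall>b<lb f. fps_nth f b = 0" using lb_le by (metis not_le)
    then have "S f (lb f) = 0" unfolding S_def by simp
    then show ?thesis unfolding S_def by simp
  qed
  then show ?thesis using fps_at_tail[OF assms(1), of "Suc (lb f)"] by (simp add: add.commute)
qed

lemma V1:
  assumes "OKfps f" "f \<noteq> 0" "res (fps_nth f (lb f)) \<noteq> 0"
  shows "fps_at v p f \<noteq> 0 \<and> v (fps_at v p f) = int (lb f) \<and>
         res (fps_at v p f * p powi (- v (fps_at v p f))) = res (fps_nth f (lb f))"
proof -
  define c where "c = fps_nth f (lb f)"
  define e where "e = fps_at v p f - c * p ^ lb f"
  have cOK: "c \<in> OK v" using assms(1) by (simp add: OKfps_def c_def)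
  have "\<not> vge 1 c" using res_0_iff[OF cOK] assms(3) by (simp add: c_def)
  then have c0: "c \<noteq> 0" "v c = 0" using cOK by (auto simp: vge_def OK_iff)
  have vx: "c * p ^ lb f \<noteq> 0" "v (c * p ^ lb f) = int (lb f)"
    using c0 vpow[of "lb f"] vmult[of c "p ^ lb f"] by auto
  have e: "vge (int (lb f) + 1) e" using fps_at_split[OF assms(1,2)] by (simp add: e_def c_def)
  have eq: "fps_at v p f = c * p ^ lb f + e" by (simp add: e_def)
  from strict[OF vx(1)] e vx(2) have st: "fps_at v p f \<noteq> 0" "v (fps_at v p f) = int (lb f)"
    using eq by auto
  have "p ^ lb f * p powi (- int (lb f)) = 1"
    using p_nz by (simp add: power_int_minus field_simps)
  then have eq2: "fps_at v p f * p powi (- int (lb f)) = c + e * p powi (- int (lb f))"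
    by (simp add: eq algebra_simps)
  have "vge ((int (lb f) + 1) + (- int (lb f))) (e * p powi (- int (lb f)))"
    using e vge_self[of "p powi (- int (lb f))"] vpowi by (intro vge_mult) auto
  then have e2: "vge 1 (e * p powi (- int (lb f)))" by simp
  then have e2OK: "e * p powi (- int (lb f)) \<in> OK v" by (simp add: OK_iff vge_mono)
  have "res (fps_at v p f * p powi (- v (fps_at v p f))) = res c"
    using st eq2 res_add[OF cOK e2OK] res_0_iff[OF e2OK] e2 by simp
  then show ?thesis using st by (simp add: c_def)
qed

lemma V2:
  assumes "OKfps f" "f \<noteq> 0" "res (fps_nth f (lb f)) = 0"
  shows "vge (int (lb f) + 1) (fps_at v p f)"
proof -
  define c where "c = fps_nth f (lb f)"
  have cOK: "c \<in> OK v" using assms(1) by (simp add: OKfps_def c_def)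
  have "vge 1 c" using res_0_iff[OF cOK] assms(3) by (simp add: c_def)
  then have "vge (1 + int (lb f)) (c * p ^ lb f)"
    using vge_self[of "p ^ lb f"] vpow[of "lb f"] by (intro vge_mult) auto
  then have "vge (int (lb f) + 1) ((fps_at v p f - c * p ^ lb f) + c * p ^ lb f)"
    using fps_at_split[OF assms(1,2)] by (intro vge_add) (auto simp: c_def add.commute)
  then show ?thesis by simp
qed

end

context vsetting begin

definition rdig :: "'k \<Rightarrow> 'k" where
  "rdig x = (if res x = 0 then 0 else (SOME r. r \<in> R \<and> vclose v 1 x r))"

definition ustep :: "'k \<Rightarrow> 'k" where "ustep x = (x - rdig x) / p"

definition dig :: "'k \<Rightarrow> nat \<Rightarrow> 'k" where "dig c k = rdig ((ustep ^^ k) c)"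

lemma rdig_props:
  assumes "x \<in> OK v"
  shows "rdig x \<in> R \<and> vge 1 (x - rdig x) \<and> (rdig x \<noteq> 0 \<longrightarrow> res (rdig x) \<noteq> 0)"
proof (cases "res x = 0")
  case True then show ?thesis using res_0_iff[OF assms] R_0 by (simp add: rdig_def)
next
  case False
  have "\<exists>r. r \<in> R \<and> vclose v 1 x r" using dense[OF assms, of 1] by blast
  then have "rdig x \<in> R \<and> vclose v 1 x (rdig x)" using False unfolding rdig_def
    using someI_ex[of "\<lambda>r. r \<in> R \<and> vclose v 1 x r"] by simp
  then have r: "rdig x \<in> R" "vclose v 1 x (rdig x)" by auto
  have rOK: "rdig x \<in> OK v" using r R_OK by auto
  have d: "vge 1 (x - rdig x)" using r by (simp add: vclose_iff)
  have "res (x - rdig x) = 0" using res_0_iff[OF OK_diff[OF assms rOK]] d by simp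
  then have "res (rdig x) = res x" using res_diff[OF assms rOK] by simp
  then show ?thesis using r d False by simp
qed

lemma ustep_OK: assumes "x \<in> OK v" shows "ustep x \<in> OK v" "x = rdig x + p * ustep x"
proof -
  have d: "vge 1 (x - rdig x)" using rdig_props[OF assms] by simp
  have "vge (1 + (-1)) ((x - rdig x) * p powi (-1))"
    using d vge_self[of "p powi (-1)"] vpowi[of "-1"] by (intro vge_mult) auto
  then show "ustep x \<in> OK v" by (simp add: ustep_def OK_iff power_int_minus divide_inverse)
  show "x = rdig x + p * ustep x" using p_nz by (simp add: ustep_def)
qed

lemma useq_OK: "c \<in> OK v \<Longrightarrow> (ustep ^^ k) c \<in> OK v"
  by (induction k) (auto intro: ustep_OK)

lemma dig_R: "c \<in> OK v \<Longrightarrow> dig c k \<in> R"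
  unfolding dig_def using rdig_props[OF useq_OK] by blast

lemma dig_res: "c \<in> OK v \<Longrightarrow> dig c k \<noteq> 0 \<Longrightarrow> res (dig c k) \<noteq> 0"
  unfolding dig_def using rdig_props[OF useq_OK] by blast

lemma dig_0: "dig 0 k = 0"
proof -
  have "(ustep ^^ k) 0 = 0" by (induction k) (auto simp: ustep_def rdig_def res_0)
  then show ?thesis by (simp add: dig_def rdig_def res_0)
qed

lemma dig_expand:
  assumes "c \<in> OK v"
  shows "c = S (Abs_fps (dig c)) N + p ^ N * (ustep ^^ N) c"
proof (induction N)
  case 0 then show ?case by (simp add: S_def)
next
  case (Suc N)
  define u where "u = (ustep ^^ N) c"
  have h: "u = rdig u + p * ustep u"
    using ustep_OK(2)[OF useq_OK[OF assms]] unfolding u_def .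
  have "p ^ N * u = p ^ N * (rdig u + p * ustep u)" by (rule arg_cong[OF h])
  then have "p ^ N * (ustep ^^ N) c = dig c N * p ^ N + p ^ Suc N * (ustep ^^ Suc N) c"
    unfolding u_def dig_def by (simp add: algebra_simps)
  then show ?case using Suc by (simp add: S_def algebra_simps)
qed

lemma dig_fps_at:
  assumes "c \<in> OK v"
  shows "OKfps (Abs_fps (dig c))" "fps_at v p (Abs_fps (dig c)) = c"
proof -
  show ok: "OKfps (Abs_fps (dig c))" using dig_R[OF assms] R_OK by (auto simp: OKfps_def)
  show "fps_at v p (Abs_fps (dig c)) = c"
  proof (rule fps_at_eqI[OF ok])
    fix N
    have "vge (int N + 0) (p ^ N * (ustep ^^ N) c)"
      using vge_self[of "p ^ N"] vpow[of N] useq_OK[OF assms, of N]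
      by (intro vge_mult) (auto simp: OK_iff)
    then show "vge (int N) (c - S (Abs_fps (dig c)) N)"
    proof -
      have "c - S (Abs_fps (dig c)) N = p ^ N * (ustep ^^ N) c"
        using dig_expand[OF assms, of N] by (simp add: algebra_simps)
      then show ?thesis using \<open>vge (int N + 0) _\<close> by simp
    qed
  qed
qed

end


lemma pm_expand: "(G :: 'a \<Rightarrow>\<^sub>0 'b::comm_monoid_add) = (\<Sum>m\<in>Poly_Mapping.keys G. Poly_Mapping.single m (Poly_Mapping.lookup G m))"
proof (rule poly_mapping_eqI)
  fix k
  have "Poly_Mapping.lookup (\<Sum>m\<in>Poly_Mapping.keys G. Poly_Mapping.single m (Poly_Mapping.lookup G m)) k
      = (\<Sum>m\<in>Poly_Mapping.keys G. Poly_Mapping.lookup (Poly_Mapping.single m (Poly_Mapping.lookup G m)) k)"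
    by (rule lookup_sum)
  also have "\<dots> = (\<Sum>m\<in>Poly_Mapping.keys G. if m = k then Poly_Mapping.lookup G m else 0)"
    by (intro sum.cong) (auto simp: lookup_single when_def)
  also have "\<dots> = Poly_Mapping.lookup G k"
    by (simp add: sum.delta in_keys_iff)
  finally show "Poly_Mapping.lookup G k = Poly_Mapping.lookup (\<Sum>m\<in>Poly_Mapping.keys G. Poly_Mapping.single m (Poly_Mapping.lookup G m)) k" by simp
qed

lemma lookup_tx_mono: "Poly_Mapping.lookup (tx_mono a b) j = (case j of None \<Rightarrow> b | Some i \<Rightarrow> Poly_Mapping.lookup a i)"
  unfolding tx_mono_def by (subst lookup_Abs_poly_mapping) simp_all

lemma lookup_x_part: "Poly_Mapping.lookup (x_part m) i = Poly_Mapping.lookup m (Some i)"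
  unfolding x_part_def by (subst lookup_Abs_poly_mapping) simp_all

lemma x_part_tx_mono [simp]: "x_part (tx_mono a b) = a"
  by (rule poly_mapping_eqI) (simp add: lookup_x_part lookup_tx_mono)

lemma x_part_add: "x_part (m + m') = x_part m + x_part m'"
  by (rule poly_mapping_eqI) (simp add: lookup_x_part lookup_add)

lemma tx_mono_inj: "tx_mono a b = tx_mono a' b' \<Longrightarrow> a = a' \<and> b = b'"
proof -
  assume h: "tx_mono a b = tx_mono a' b'"
  then have "x_part (tx_mono a b) = x_part (tx_mono a' b')" by simp
  moreover have "Poly_Mapping.lookup (tx_mono a b) None = Poly_Mapping.lookup (tx_mono a' b') None"
    using h by simp
  ultimately show ?thesis by (simp add: lookup_tx_mono)
qed

definition closed_set :: "'a::comm_ring_1 set \<Rightarrow> bool" where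
  "closed_set A \<longleftrightarrow> 0 \<in> A \<and> (\<forall>x\<in>A. \<forall>y\<in>A. x + y \<in> A \<and> x * y \<in> A)"

lemma ptx_0: "0 \<in> A \<Longrightarrow> 0 \<in> coeff_ptx A" by (simp add: coeff_ptx_def)

lemma ptx_add: "closed_set A \<Longrightarrow> G \<in> coeff_ptx A \<Longrightarrow> H \<in> coeff_ptx A \<Longrightarrow> G + H \<in> coeff_ptx A"
  by (simp add: coeff_ptx_def lookup_add closed_set_def)

lemma ptx_single: "0 \<in> A \<Longrightarrow> c \<in> A \<Longrightarrow> Poly_Mapping.single m c \<in> coeff_ptx A"
  by (simp add: coeff_ptx_def lookup_single when_def)

lemma ptx_sum: "closed_set A \<Longrightarrow> (\<And>x. x \<in> X \<Longrightarrow> G x \<in> coeff_ptx A) \<Longrightarrow> sum G X \<in> coeff_ptx A"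
  by (induction X rule: infinite_finite_induct)
     (auto intro: ptx_add ptx_0 simp: closed_set_def)

lemma mult_expand:
  "(G :: ('a::comm_monoid_add) \<Rightarrow>\<^sub>0 ('b::comm_ring_1)) * H =
   (\<Sum>m\<in>Poly_Mapping.keys G. \<Sum>m'\<in>Poly_Mapping.keys H.
      Poly_Mapping.single (m + m') (Poly_Mapping.lookup G m * Poly_Mapping.lookup H m'))"
proof -
  have "G * H = (\<Sum>m\<in>Poly_Mapping.keys G. Poly_Mapping.single m (Poly_Mapping.lookup G m)) *
                (\<Sum>m'\<in>Poly_Mapping.keys H. Poly_Mapping.single m' (Poly_Mapping.lookup H m'))"
    using pm_expand[of G] pm_expand[of H] by simp
  also have "\<dots> = (\<Sum>m\<in>Poly_Mapping.keys G. \<Sum>m'\<in>Poly_Mapping.keys H.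
      Poly_Mapping.single m (Poly_Mapping.lookup G m) * Poly_Mapping.single m' (Poly_Mapping.lookup H m'))"
    by (subst sum_distrib_right) (simp add: sum_distrib_left)
  finally show ?thesis by (simp add: mult_single)
qed

lemma ptx_mult: "closed_set A \<Longrightarrow> G \<in> coeff_ptx A \<Longrightarrow> H \<in> coeff_ptx A \<Longrightarrow> G * H \<in> coeff_ptx A"
  apply (subst mult_expand)
  apply (intro ptx_sum ptx_single)
  apply (auto simp: closed_set_def coeff_ptx_def)
  done

context vsetting begin

lemma closed_OK: "closed_set (OK v)" by (simp add: closed_set_def OK_0 OK_add OK_mult)
lemma closed_R: "closed_set R" by (simp add: closed_set_def R_0 R_add R_mult)

lemma ptx_R_OK: "coeff_ptx R \<subseteq> coeff_ptx (OK v)" using R_OK by (auto simp: coeff_ptx_def)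

lemma reduce_alt:
  assumes "finite K" "Poly_Mapping.keys G \<subseteq> K"
  shows "reduce_t1 res G = (\<Sum>m\<in>K. Poly_Mapping.single (x_part m) (res (Poly_Mapping.lookup G m)))"
  unfolding reduce_t1_def
  by (rule sum.mono_neutral_left[OF assms]) (auto simp: in_keys_iff res_0)

lemma reduce_0 [simp]: "reduce_t1 res 0 = 0" by (simp add: reduce_t1_def)

lemma reduce_add:
  assumes "G \<in> coeff_ptx (OK v)" "H \<in> coeff_ptx (OK v)"
  shows "reduce_t1 res (G + H) = reduce_t1 res G + reduce_t1 res H"
proof -
  let ?K = "Poly_Mapping.keys G \<union> Poly_Mapping.keys H"
  have k: "Poly_Mapping.keys (G + H) \<subseteq> ?K" by (rule keys_add)
  have fin: "finite ?K" by simp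
  have e: "\<And>m. Poly_Mapping.single (x_part m) (res (Poly_Mapping.lookup (G + H) m)) =
     Poly_Mapping.single (x_part m) (res (Poly_Mapping.lookup G m)) + Poly_Mapping.single (x_part m) (res (Poly_Mapping.lookup H m))"
    using assms by (simp add: lookup_add res_add coeff_ptx_def single_add)
  have g: "reduce_t1 res G = (\<Sum>m\<in>?K. Poly_Mapping.single (x_part m) (res (Poly_Mapping.lookup G m)))"
    by (rule reduce_alt) auto
  have h: "reduce_t1 res H = (\<Sum>m\<in>?K. Poly_Mapping.single (x_part m) (res (Poly_Mapping.lookup H m)))"
    by (rule reduce_alt) auto
  show ?thesis
    unfolding reduce_alt[OF fin k] g h
    by (simp add: e sum.distrib)
qed

lemma reduce_single:
  assumes "c \<in> OK v"
  shows "reduce_t1 res (Poly_Mapping.single m c) = Poly_Mapping.single (x_part m) (res c)"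
  by (subst reduce_alt[of "{m}"]) auto

lemma reduce_sum:
  assumes "\<And>x. x \<in> X \<Longrightarrow> G x \<in> coeff_ptx (OK v)"
  shows "reduce_t1 res (sum G X) = (\<Sum>x\<in>X. reduce_t1 res (G x))"
  using assms
proof (induction X rule: infinite_finite_induct)
  case (insert x F)
  then show ?case using reduce_add[of "G x" "sum G F"] ptx_sum[OF closed_OK, of F G] by simp
qed auto

lemma reduce_mult:
  assumes "G \<in> coeff_ptx (OK v)" "H \<in> coeff_ptx (OK v)"
  shows "reduce_t1 res (G * H) = reduce_t1 res G * reduce_t1 res H"
proof -
  have okG: "\<And>m. Poly_Mapping.lookup G m \<in> OK v" and okH: "\<And>m. Poly_Mapping.lookup H m \<in> OK v"
    using assms by (auto simp: coeff_ptx_def)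
  have "reduce_t1 res (G * H) = (\<Sum>m\<in>Poly_Mapping.keys G. \<Sum>m'\<in>Poly_Mapping.keys H.
      reduce_t1 res (Poly_Mapping.single (m + m') (Poly_Mapping.lookup G m * Poly_Mapping.lookup H m')))"
    apply (subst mult_expand)
    apply (subst reduce_sum)
     apply (rule ptx_sum[OF closed_OK], rule ptx_single, rule OK_0, rule OK_mult[OF okG okH])
    apply (rule sum.cong, rule refl)
    apply (rule reduce_sum)
    apply (rule ptx_single, rule OK_0, rule OK_mult[OF okG okH])
    done
  also have "\<dots> = (\<Sum>m\<in>Poly_Mapping.keys G. \<Sum>m'\<in>Poly_Mapping.keys H.
      Poly_Mapping.single (x_part m) (res (Poly_Mapping.lookup G m)) *
      Poly_Mapping.single (x_part m') (res (Poly_Mapping.lookup H m')))"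
    by (simp add: reduce_single OK_mult okG okH res_mult mult_single x_part_add)
  also have "\<dots> = reduce_t1 res G * reduce_t1 res H"
    unfolding reduce_t1_def by (subst sum_distrib_right) (simp add: sum_distrib_left)
  finally show ?thesis .
qed

end

context vsetting begin

lemma in_tw_zero: "in_tw w 0 = 0"
  by (simp add: in_tw_def tx_terms_def)

lemma lookup_pi: "Poly_Mapping.lookup (pi_map v p F) a = fps_at v p (Poly_Mapping.lookup F a)"
proof -
  have "Poly_Mapping.lookup (pi_map v p F) a =
      (\<Sum>x\<in>Poly_Mapping.keys F. if x = a then fps_at v p (Poly_Mapping.lookup F x) else 0)"
    unfolding pi_map_def lookup_sum by (intro sum.cong) (auto simp: lookup_single when_def)
  also have "\<dots> = fps_at v p (Poly_Mapping.lookup F a)"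
    by (simp add: sum.delta in_keys_iff fps_at_0)
  finally show ?thesis .
qed

lemma pstx_OKfps: "F \<in> coeff_pstx (OK v) \<Longrightarrow> OKfps (Poly_Mapping.lookup F a)"
  by (simp add: coeff_pstx_def OKfps_def)

definition ba :: "(('n::finite \<Rightarrow>\<^sub>0 nat) \<Rightarrow>\<^sub>0 'k fps) \<Rightarrow> ('n \<Rightarrow>\<^sub>0 nat) \<Rightarrow> nat"
  where "ba F a = lb (Poly_Mapping.lookup F a)"
definition ca :: "(('n::finite \<Rightarrow>\<^sub>0 nat) \<Rightarrow>\<^sub>0 'k fps) \<Rightarrow> ('n \<Rightarrow>\<^sub>0 nat) \<Rightarrow> 'k"
  where "ca F a = fps_nth (Poly_Mapping.lookup F a) (ba F a)"
definition wa :: "(('n::finite \<Rightarrow>\<^sub>0 nat) \<Rightarrow>\<^sub>0 'k fps) \<Rightarrow> ('n \<Rightarrow> real) \<Rightarrow> ('n \<Rightarrow>\<^sub>0 nat) \<Rightarrow> real"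
  where "wa F w a = wdot w a - real (ba F a)"
definition MM :: "(('n::finite \<Rightarrow>\<^sub>0 nat) \<Rightarrow>\<^sub>0 'k fps) \<Rightarrow> ('n \<Rightarrow> real) \<Rightarrow> real"
  where "MM F w = Max (wa F w ` Poly_Mapping.keys F)"
definition A0 :: "(('n::finite \<Rightarrow>\<^sub>0 nat) \<Rightarrow>\<^sub>0 'k fps) \<Rightarrow> ('n \<Rightarrow> real) \<Rightarrow> ('n \<Rightarrow>\<^sub>0 nat) set"
  where "A0 F w = {a \<in> Poly_Mapping.keys F. wa F w a = MM F w}"
definition Z :: "(('n::finite \<Rightarrow>\<^sub>0 nat) \<Rightarrow>\<^sub>0 'k fps) \<Rightarrow> ('n \<Rightarrow> real) \<Rightarrow> ('n \<Rightarrow>\<^sub>0 nat) set"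
  where "Z F w = {a \<in> A0 F w. res (ca F a) \<noteq> 0}"

context
  fixes F :: "('n::finite \<Rightarrow>\<^sub>0 nat) \<Rightarrow>\<^sub>0 'k fps" and w :: "'n \<Rightarrow> real"
  assumes FOK: "F \<in> coeff_pstx (OK v)" and Fnz: "F \<noteq> 0"
begin

lemma keysF_ne: "Poly_Mapping.keys F \<noteq> {}" using Fnz by simp

lemma wa_le: "a \<in> Poly_Mapping.keys F \<Longrightarrow> wa F w a \<le> MM F w"
  unfolding MM_def by (rule Max_ge) auto

lemma MM_in: "\<exists>a\<in>Poly_Mapping.keys F. wa F w a = MM F w"
proof -
  have "MM F w \<in> wa F w ` Poly_Mapping.keys F" unfolding MM_def using keysF_ne by (intro Max_in) auto
  then show ?thesis by auto
qed

lemma ca_nz: "a \<in> Poly_Mapping.keys F \<Longrightarrow> ca F a \<noteq> 0"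
  unfolding ca_def ba_def by (rule lb_nz) (simp add: in_keys_iff)

lemma ca_OK: "ca F a \<in> OK v" using FOK by (simp add: ca_def coeff_pstx_def)

lemma tx_terms_props: "(a, b) \<in> tx_terms F \<Longrightarrow> a \<in> Poly_Mapping.keys F \<and> ba F a \<le> b"
  unfolding tx_terms_def ba_def
  by (auto simp: in_keys_iff intro: lb_le)

lemma K1: "in_tw w F = (\<Sum>a\<in>A0 F w. Poly_Mapping.single (tx_mono a (ba F a)) (ca F a))"
proof -
  let ?wt = "\<lambda>(a, b). wdot w a - real b"
  have le: "\<forall>x\<in>?wt ` tx_terms F. x \<le> MM F w"
  proof
    fix x assume "x \<in> ?wt ` tx_terms F"
    then obtain a b where ab: "(a, b) \<in> tx_terms F" "x = wdot w a - real b" by auto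
    then have "a \<in> Poly_Mapping.keys F" "ba F a \<le> b" using tx_terms_props by auto
    then show "x \<le> MM F w" using wa_le[of a] ab(2) unfolding wa_def by auto
  qed
  obtain a0 where a0: "a0 \<in> Poly_Mapping.keys F" "wa F w a0 = MM F w" using MM_in by blast
  have "(a0, ba F a0) \<in> tx_terms F" using ca_nz[OF a0(1)] by (simp add: tx_terms_def ca_def)
  then have "MM F w \<in> ?wt ` tx_terms F" using a0(2) unfolding wa_def by force
  then have sup: "Sup (?wt ` tx_terms F) = MM F w" using le by (intro cSup_eq_maximum) auto
  have set: "{ab \<in> tx_terms F. ?wt ab = MM F w} = (\<lambda>a. (a, ba F a)) ` A0 F w"
  proof (rule set_eqI, rule iffI)
    fix ab assume h: "ab \<in> {ab \<in> tx_terms F. ?wt ab = MM F w}"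
    obtain a b where ab: "ab = (a, b)" by force
    have t: "(a, b) \<in> tx_terms F" "wdot w a - real b = MM F w" using h ab by auto
    then have k: "a \<in> Poly_Mapping.keys F" "ba F a \<le> b" using tx_terms_props by auto
    have "wa F w a \<le> MM F w" using wa_le[OF k(1)] .
    then have "b = ba F a" using t(2) k(2) unfolding wa_def by auto
    then show "ab \<in> (\<lambda>a. (a, ba F a)) ` A0 F w" using ab k t unfolding A0_def wa_def by auto
  next
    fix ab assume "ab \<in> (\<lambda>a. (a, ba F a)) ` A0 F w"
    then obtain a where a: "a \<in> A0 F w" "ab = (a, ba F a)" by auto
    then have "ca F a \<noteq> 0" using ca_nz by (auto simp: A0_def)
    then show "ab \<in> {ab \<in> tx_terms F. ?wt ab = MM F w}"
      using a by (auto simp: tx_terms_def ca_def A0_def wa_def)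
  qed
  have inj: "inj_on (\<lambda>a. (a, ba F a)) (A0 F w)" by (auto intro: inj_onI)
  show ?thesis
    unfolding in_tw_def Let_def sup set sum.reindex[OF inj]
    by (simp add: ca_def)
qed

lemma K2: "reduce_t1 res (in_tw w F) = (\<Sum>a\<in>Z F w. Poly_Mapping.single a (res (ca F a)))"
proof -
  have "reduce_t1 res (in_tw w F) = (\<Sum>a\<in>A0 F w. Poly_Mapping.single a (res (ca F a)))"
    unfolding K1 by (subst reduce_sum) (auto intro!: ptx_single OK_0 ca_OK simp: reduce_single ca_OK)
  also have "\<dots> = (\<Sum>a\<in>Z F w. Poly_Mapping.single a (res (ca F a)))"
    by (rule sum.mono_neutral_right) (auto simp: Z_def A0_def)
  finally show ?thesis .
qed

lemma K3:
  assumes "Z F w \<noteq> {}"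
  shows "in_vw v p res w (pi_map v p F) = (\<Sum>a\<in>Z F w. Poly_Mapping.single a (res (ca F a)))"
proof -
  define f where "f = pi_map v p F"
  define wf where "wf = (\<lambda>a. wdot w a - real_of_int (v (Poly_Mapping.lookup f a)))"
  have lf: "\<And>a. Poly_Mapping.lookup f a = fps_at v p (Poly_Mapping.lookup F a)"
    by (simp add: f_def lookup_pi)
  have kf: "Poly_Mapping.keys f \<subseteq> Poly_Mapping.keys F"
    using lf fps_at_0 by (auto simp: in_keys_iff)
  have good: "\<And>a. a \<in> Poly_Mapping.keys F \<Longrightarrow> res (ca F a) \<noteq> 0 \<Longrightarrow>
      Poly_Mapping.lookup f a \<noteq> 0 \<and> wf a = wa F w a \<and>
      res (Poly_Mapping.lookup f a * p powi (- v (Poly_Mapping.lookup f a))) = res (ca F a)"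
  proof -
    fix a assume a: "a \<in> Poly_Mapping.keys F" "res (ca F a) \<noteq> 0"
    have "OKfps (Poly_Mapping.lookup F a)" "Poly_Mapping.lookup F a \<noteq> 0"
      using pstx_OKfps[OF FOK] a(1) by (auto simp: in_keys_iff)
    from V1[OF this] a(2) show "?thesis a"
      unfolding lf wf_def wa_def ba_def ca_def by (metis of_int_of_nat_eq)
  qed
  have bad: "\<And>a. a \<in> Poly_Mapping.keys f \<Longrightarrow> res (ca F a) = 0 \<Longrightarrow> wf a < MM F w"
  proof -
    fix a assume a: "a \<in> Poly_Mapping.keys f" "res (ca F a) = 0"
    then have aF: "a \<in> Poly_Mapping.keys F" using kf by auto
    have "OKfps (Poly_Mapping.lookup F a)" "Poly_Mapping.lookup F a \<noteq> 0"
      using pstx_OKfps[OF FOK] aF by (auto simp: in_keys_iff)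
    from V2[OF this] a have "vge (int (ba F a) + 1) (Poly_Mapping.lookup f a)"
      by (simp add: lf ba_def ca_def)
    moreover have "Poly_Mapping.lookup f a \<noteq> 0" using a(1) by (simp add: in_keys_iff)
    ultimately have "v (Poly_Mapping.lookup f a) \<ge> int (ba F a) + 1" by (simp add: vge_def)
    then have "wf a \<le> wa F w a - 1" unfolding wf_def wa_def by linarith
    then show "wf a < MM F w" using wa_le[OF aF] by linarith
  qed
  have le: "\<And>a. a \<in> Poly_Mapping.keys f \<Longrightarrow> wf a \<le> MM F w"
  proof -
    fix a assume a: "a \<in> Poly_Mapping.keys f"
    then have aF: "a \<in> Poly_Mapping.keys F" using kf by auto
    show "wf a \<le> MM F w"
      using good[OF aF] bad[OF a] wa_le[OF aF] by (cases "res (ca F a) = 0") auto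
  qed
  have Zk: "\<And>a. a \<in> Z F w \<Longrightarrow> a \<in> Poly_Mapping.keys f \<and> wf a = MM F w"
    using good by (auto simp: Z_def A0_def in_keys_iff)
  obtain z where z: "z \<in> Z F w" using assms by auto
  have Mx: "Max (wf ` Poly_Mapping.keys f) = MM F w"
    using Zk[OF z] le by (intro Max_eqI) (auto intro: rev_image_eqI[of z _ _ wf])
  have set: "{a \<in> Poly_Mapping.keys f. wf a = MM F w} = Z F w"
  proof (rule set_eqI, rule iffI)
    fix a assume a: "a \<in> {a \<in> Poly_Mapping.keys f. wf a = MM F w}"
    then have aF: "a \<in> Poly_Mapping.keys F" using kf by auto
    have r: "res (ca F a) \<noteq> 0" using bad a by fastforce
    then show "a \<in> Z F w" using good[OF aF r] a aF by (auto simp: Z_def A0_def)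
  qed (use Zk in auto)
  show ?thesis
    unfolding f_def[symmetric] in_vw_def Let_def wf_def[symmetric] Mx set
    using good by (intro sum.cong) (auto simp: Z_def A0_def)
qed

end

lemma key:
  assumes "F \<in> coeff_pstx (OK v)"
  shows "reduce_t1 res (in_tw w F) = 0 \<or> reduce_t1 res (in_tw w F) = in_vw v p res w (pi_map v p F)"
proof (cases "F = 0")
  case True then show ?thesis by (simp add: in_tw_zero)
next
  case False
  show ?thesis
  proof (cases "Z F w = {}")
    case True then show ?thesis using K2[OF assms False] by simp
  next
    case nz: False
    show ?thesis using K2[OF assms False] K3[OF assms False nz] by simp
  qed
qed

end


lemma lookup_map0: "g 0 = 0 \<Longrightarrow> Poly_Mapping.lookup (Poly_Mapping.map g f) k = g (Poly_Mapping.lookup f k)"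
  by transfer (auto simp: when_def)

lemma ideal_gen_sub: "S \<subseteq> ideal_gen A S"
  unfolding ideal_gen_def by auto

lemma ideal_gen_is:
  assumes "is_ideal A A" "S \<subseteq> A"
  shows "is_ideal A (ideal_gen A S)"
proof -
  let ?F = "{J. is_ideal A J \<and> S \<subseteq> J}"
  have ne: "A \<in> ?F" using assms by auto
  show ?thesis unfolding ideal_gen_def is_ideal_def[of A "\<Inter> ?F"]
  proof (intro conjI ballI)
    show "\<Inter> ?F \<subseteq> A" using ne by auto
    show "0 \<in> \<Inter> ?F" by (auto simp: is_ideal_def)
    fix x y assume "x \<in> \<Inter> ?F" "y \<in> \<Inter> ?F"
    then show "x + y \<in> \<Inter> ?F" by (auto simp: is_ideal_def)
  next
    fix a x assume "a \<in> A" "x \<in> \<Inter> ?F"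
    then show "a * x \<in> \<Inter> ?F" by (auto simp: is_ideal_def)
  qed
qed

lemmas ideal_gen_ideal = ideal_gen_is ideal_gen_sub

lemma ideal_gen_least: "is_ideal A J \<Longrightarrow> S \<subseteq> J \<Longrightarrow> ideal_gen A S \<subseteq> J"
  unfolding ideal_gen_def by auto

lemma ideal_UNIV: "is_ideal UNIV UNIV" by (simp add: is_ideal_def)

context vsetting begin

lemma ideal_ptxR: "is_ideal (coeff_ptx R) (coeff_ptx R)"
  unfolding is_ideal_def using closed_R
  by (auto intro: ptx_0 ptx_add ptx_mult simp: closed_set_def)

lemma in_tw_R:
  assumes "F \<in> coeff_pstx R"
  shows "in_tw w F \<in> coeff_ptx R"
proof (cases "F = 0")
  case True then show ?thesis by (simp add: in_tw_zero ptx_0 R_0)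
next
  case False
  have FOK: "F \<in> coeff_pstx (OK v)" using assms R_OK by (auto simp: coeff_pstx_def)
  show ?thesis unfolding K1[OF FOK False]
    using assms closed_R R_0 by (intro ptx_sum ptx_single) (auto simp: ca_def coeff_pstx_def)
qed

lemma res_lift: "\<exists>r\<in>R. res r = c"
proof -
  obtain x where x: "x \<in> OK v" "res x = c" using res_surj by (metis UNIV_I imageE)
  obtain r where r: "r \<in> R" "vclose v 1 x r" using dense[OF x(1)] by blast
  have rOK: "r \<in> OK v" using r R_OK by auto
  have "res (x - r) = 0" using res_0_iff[OF OK_diff[OF x(1) rOK]] r by (simp add: vclose_iff)
  then have "res r = res x" using res_diff[OF x(1) rOK] by simp
  then show ?thesis using r x by auto
qed

lemma reduce_surj: "\<exists>G\<in>coeff_ptx R. reduce_t1 res G = g"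
proof -
  define rr where "rr c = (SOME r. r \<in> R \<and> res r = c)" for c
  have rr: "rr c \<in> R \<and> res (rr c) = c" for c
    unfolding rr_def using res_lift[of c] someI_ex[of "\<lambda>r. r \<in> R \<and> res r = c"] by blast
  define G where "G = (\<Sum>a\<in>Poly_Mapping.keys g. Poly_Mapping.single (tx_mono a 0) (rr (Poly_Mapping.lookup g a)))"
  have "G \<in> coeff_ptx R" unfolding G_def using closed_R R_0 rr by (intro ptx_sum ptx_single) auto
  moreover have "reduce_t1 res G = g"
  proof -
    have "reduce_t1 res G = (\<Sum>a\<in>Poly_Mapping.keys g. Poly_Mapping.single a (Poly_Mapping.lookup g a))"
      unfolding G_def using rr R_OK
      by (subst reduce_sum) (auto intro!: ptx_single OK_0 sum.cong simp: reduce_single subsetD[OF R_OK])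
    then show ?thesis using pm_expand[of g] by simp
  qed
  ultimately show ?thesis by blast
qed

lemma construct:
  assumes f: "f \<in> coeff_poly (OK v)"
  shows "\<exists>F\<in>coeff_pstx R. pi_map v p F = f \<and> reduce_t1 res (in_tw w F) = in_vw v p res w f"
proof -
  define F where "F = Poly_Mapping.map (\<lambda>c. Abs_fps (dig c)) f"
  have g0: "Abs_fps (dig 0) = 0" by (simp add: dig_0 fps_eq_iff)
  have lF: "Poly_Mapping.lookup F a = Abs_fps (dig (Poly_Mapping.lookup f a))" for a
    unfolding F_def by (rule lookup_map0) (rule g0)
  have fa: "Poly_Mapping.lookup f a \<in> OK v" for a using f by (simp add: coeff_poly_def)
  have FR: "F \<in> coeff_pstx R" using dig_R[OF fa] by (simp add: coeff_pstx_def lF)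
  have FOK: "F \<in> coeff_pstx (OK v)" using FR R_OK by (auto simp: coeff_pstx_def)
  have pif: "pi_map v p F = f"
    by (rule poly_mapping_eqI) (simp add: lookup_pi lF dig_fps_at[OF fa])
  have "reduce_t1 res (in_tw w F) = in_vw v p res w f"
  proof (cases "F = 0")
    case True
    then have "f = 0" using pif by (simp add: pi_map_def)
    then show ?thesis using True by (simp add: in_tw_zero in_vw_def)
  next
    case False
    obtain a0 where a0: "a0 \<in> Poly_Mapping.keys F" "wa F w a0 = MM F w" using MM_in[OF FOK False] by blast
    have "ca F a0 \<noteq> 0" using ca_nz[OF FOK False a0(1)] .
    moreover have "ca F a0 = dig (Poly_Mapping.lookup f a0) (ba F a0)" by (simp add: ca_def lF)
    ultimately have "res (ca F a0) \<noteq> 0" using dig_res[OF fa] by simp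
    then have "a0 \<in> Z F w" using a0 by (simp add: Z_def A0_def)
    then have "Z F w \<noteq> {}" by auto
    then show ?thesis using K2[OF FOK False] K3[OF FOK False] pif by simp
  qed
  then show ?thesis using FR pif by blast
qed

theorem main:
  fixes I :: "(('n::finite \<Rightarrow>\<^sub>0 nat) \<Rightarrow>\<^sub>0 'k) set" and w :: "'n \<Rightarrow> real"
  assumes I: "is_ideal (coeff_poly (OK v)) I"
  shows "reduce_t1 res ` in_tw_ideal R w (pi_preimage v p R I) = in_vw_ideal v p res w I"
proof -
  let ?A = "coeff_ptx R :: (('n option \<Rightarrow>\<^sub>0 nat) \<Rightarrow>\<^sub>0 'k) set"
  let ?S = "in_tw w ` pi_preimage v p R I"
  let ?T = "in_vw v p res w ` I"
  let ?T' = "ideal_gen UNIV ?T"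
  have SA: "?S \<subseteq> ?A" using in_tw_R by (auto simp: pi_preimage_def)
  have IS: "is_ideal ?A (ideal_gen ?A ?S)" "?S \<subseteq> ideal_gen ?A ?S"
    using ideal_gen_is[OF ideal_ptxR SA] ideal_gen_sub[of ?S ?A] by auto
  have IT: "is_ideal UNIV ?T'" "?T \<subseteq> ?T'"
    using ideal_gen_is[OF ideal_UNIV, of ?T] ideal_gen_sub[of ?T UNIV] by auto
  have AOK: "G \<in> ?A \<Longrightarrow> G \<in> coeff_ptx (OK v)" for G using ptx_R_OK by auto
  have genA: "ideal_gen ?A ?S \<subseteq> ?A" using IS(1) by (simp add: is_ideal_def)
  have sub: "reduce_t1 res ` ideal_gen ?A ?S \<subseteq> ?T'"
  proof -
    let ?J = "{G \<in> ?A. reduce_t1 res G \<in> ?T'}"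
    have "is_ideal ?A ?J"
      unfolding is_ideal_def
    proof (intro conjI ballI)
      show "?J \<subseteq> ?A" by auto
      show "0 \<in> ?J" using IT R_0 by (auto simp: is_ideal_def ptx_0)
    next
      fix x y assume "x \<in> ?J" "y \<in> ?J"
      then show "x + y \<in> ?J" using IT(1) closed_R
        by (auto simp: is_ideal_def reduce_add AOK intro: ptx_add)
    next
      fix a x assume "a \<in> ?A" "x \<in> ?J"
      then show "a * x \<in> ?J" using IT(1) closed_R
        by (auto simp: is_ideal_def reduce_mult AOK intro: ptx_mult)
    qed
    moreover have "?S \<subseteq> ?J"
    proof
      fix G assume "G \<in> ?S"
      then obtain F where F: "F \<in> pi_preimage v p R I" "G = in_tw w F" by auto
      have FR: "F \<in> coeff_pstx R" "pi_map v p F \<in> I" using F by (auto simp: pi_preimage_def)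
      have FOK: "F \<in> coeff_pstx (OK v)" using FR R_OK by (auto simp: coeff_pstx_def)
      have T0: "0 \<in> ?T'" using IT(1) by (simp add: is_ideal_def)
      have T1: "in_vw v p res w (pi_map v p F) \<in> ?T'" using IT(2) FR(2) by blast
      have "reduce_t1 res G \<in> ?T'"
        using key[OF FOK, of w] F(2) T0 T1 by metis
      then show "G \<in> ?J" using F SA by auto
    qed
    ultimately have "ideal_gen ?A ?S \<subseteq> ?J" by (rule ideal_gen_least)
    then show ?thesis by auto
  qed
  have sup: "?T' \<subseteq> reduce_t1 res ` ideal_gen ?A ?S"
  proof (rule ideal_gen_least)
    show "is_ideal UNIV (reduce_t1 res ` ideal_gen ?A ?S)"
      unfolding is_ideal_def
    proof (intro conjI ballI)
      show "reduce_t1 res ` ideal_gen ?A ?S \<subseteq> UNIV" by simp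
      show "0 \<in> reduce_t1 res ` ideal_gen ?A ?S"
        using IS(1) by (auto simp: is_ideal_def intro: rev_image_eqI[of 0])
    next
      fix x y assume "x \<in> reduce_t1 res ` ideal_gen ?A ?S" "y \<in> reduce_t1 res ` ideal_gen ?A ?S"
      then obtain G H where G: "G \<in> ideal_gen ?A ?S" "x = reduce_t1 res G"
        and H: "H \<in> ideal_gen ?A ?S" "y = reduce_t1 res H" by auto
      have "G \<in> coeff_ptx (OK v)" "H \<in> coeff_ptx (OK v)" using G(1) H(1) genA AOK by blast+
      then have "x + y = reduce_t1 res (G + H)" using G(2) H(2) by (simp add: reduce_add)
      moreover have "G + H \<in> ideal_gen ?A ?S" using G H IS(1) by (simp add: is_ideal_def)
      ultimately show "x + y \<in> reduce_t1 res ` ideal_gen ?A ?S" by blast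
    next
      fix a x assume "x \<in> reduce_t1 res ` ideal_gen ?A ?S"
      then obtain G where G: "G \<in> ideal_gen ?A ?S" "x = reduce_t1 res G" by auto
      obtain G0 where G0: "G0 \<in> ?A" "reduce_t1 res G0 = a" using reduce_surj by blast
      have "G \<in> coeff_ptx (OK v)" "G0 \<in> coeff_ptx (OK v)" using G(1) G0(1) genA AOK by blast+
      then have "a * x = reduce_t1 res (G0 * G)" using G(2) G0(2) by (simp add: reduce_mult)
      moreover have "G0 * G \<in> ideal_gen ?A ?S" using G G0 IS(1) by (simp add: is_ideal_def)
      ultimately show "a * x \<in> reduce_t1 res ` ideal_gen ?A ?S" by blast
    qed
    show "?T \<subseteq> reduce_t1 res ` ideal_gen ?A ?S"
    proof
      fix g assume "g \<in> ?T"
      then obtain f where f: "f \<in> I" "g = in_vw v p res w f" by auto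
      have "f \<in> coeff_poly (OK v)" using I f by (auto simp: is_ideal_def)
      then obtain F where F: "F \<in> coeff_pstx R" "pi_map v p F = f" "reduce_t1 res (in_tw w F) = g"
        using construct[of f w] f by auto
      have "F \<in> pi_preimage v p R I" using F f by (simp add: pi_preimage_def)
      then have "in_tw w F \<in> ideal_gen ?A ?S" using IS(2) by auto
      then show "g \<in> reduce_t1 res ` ideal_gen ?A ?S" using F(3) by force
    qed
  qed
  show ?thesis unfolding in_tw_ideal_def in_vw_ideal_def using sub sup by blast
qed

end

theorem proposition2p8:
  fixes v :: "'k::field \<Rightarrow> int" and p :: 'k and res :: "'k \<Rightarrow> 'r::field"
    and R :: "'k set" and I :: "(('n::finite \<Rightarrow>\<^sub>0 nat) \<Rightarrow>\<^sub>0 'k) set" and w :: "'n \<Rightarrow> real"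
  assumes "discrete_valuation v p"
    and "vcomplete v"
    and "residue_map v res"
    and "dense_noeth_subring v p R"
    and "is_ideal (coeff_poly (OK v)) I"
  shows "reduce_t1 res ` in_tw_ideal R w (pi_preimage v p R I) = in_vw_ideal v p res w I"
proof -
  interpret vsetting v p res R using assms(1-4) by unfold_locales
  show ?thesis by (rule main[OF assms(5)])
qed

end
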